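(* Let $(a_{i,j})_{i,j\in\mathbb{N}}$ and $(b_{i,j})_{i,j\in\mathbb{N}}$ be arbitrary real numbers, and let $(T(n,k))_{n\ge 0,\,k\in\mathbb{Z}}$ be defined by $T(0,0)=1$, $T(n,k)=0$ whenever $k<0$ or $k>n$, and \[ T(n,k)=a_{n,k}\,T(n-1,k)+b_{n,k}\,T(n-1,k-1)\qquad (n\ge 1). \] Then for all integers $0\le k\le n$, \[ T(n,k)=\sum_{\sigma\in\mathcal{C}^\uparrow(k,n)}\ \prod_{i=1}^{n-k} a_{\tilde\sigma_i,\ \tilde\sigma_i-i}\ \prod_{i=1}^{k} b_{\sigma(i),\ i}. \]
   Context: $[n]=\{1,\dots,n\}$. $\mathcal{C}^\uparrow(k,n)$ is the set of strictly increasing functions $\sigma:[k]\to[n]$. For $\sigma\in\mathcal{C}^\uparrow(k,n)$, $(\tilde\sigma_1<\tilde\sigma_2<\cdots<\tilde\sigma_{n-k})$ denotes the increasing list of the elements of $[n]\setminus\sigma([k])$. Empty products equal $1$. *)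

theory Defs
  imports Complex_Main "HOL-Library.FuncSet"
begin

definition incr_maps :: "nat \<Rightarrow> nat \<Rightarrow> (nat \<Rightarrow> nat) set" where
  "incr_maps k n = {\<sigma> \<in> {1..k} \<rightarrow>\<^sub>E {1..n}.
      \<forall>i\<in>{1..k}. \<forall>j\<in>{1..k}. i < j \<longrightarrow> \<sigma> i < \<sigma> j}"

definition compl_elem :: "nat \<Rightarrow> nat \<Rightarrow> (nat \<Rightarrow> nat) \<Rightarrow> nat \<Rightarrow> nat" where
  "compl_elem k n \<sigma> i = sorted_list_of_set ({1..n} - \<sigma> ` {1..k}) ! (i - 1)"

end

theory Submission
  imports Defs
begin

definition Lc :: "nat \<Rightarrow> nat \<Rightarrow> (nat \<Rightarrow> nat) \<Rightarrow> nat list" where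
  "Lc k n \<sigma> = sorted_list_of_set ({1..n} - \<sigma> ` {1..k})"

definition Pa :: "(nat \<Rightarrow> nat \<Rightarrow> real) \<Rightarrow> nat list \<Rightarrow> real" where
  "Pa a xs = (\<Prod>i=1..length xs. a (xs!(i-1)) (xs!(i-1) - i))"

lemma Pa_snoc: "Pa a (xs @ [x]) = Pa a xs * a x (x - Suc (length xs))"
proof -
  have "Pa a (xs @ [x]) = (\<Prod>i=1..length xs. a ((xs@[x])!(i-1)) ((xs@[x])!(i-1) - i)) * a x (x - Suc (length xs))"
    unfolding Pa_def by simp
  also have "(\<Prod>i=1..length xs. a ((xs@[x])!(i-1)) ((xs@[x])!(i-1) - i)) = Pa a xs"
    unfolding Pa_def by (rule prod.cong[OF refl]) (auto simp: nth_append)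
  finally show ?thesis .
qed

lemma incr_PiE: "\<sigma> \<in> incr_maps k n \<Longrightarrow> \<sigma> \<in> {1..k} \<rightarrow>\<^sub>E {1..n}"
  unfolding incr_maps_def by simp

lemma incr_mono: "\<sigma> \<in> incr_maps k n \<Longrightarrow> i \<in> {1..k} \<Longrightarrow> j \<in> {1..k} \<Longrightarrow> i < j \<Longrightarrow> \<sigma> i < \<sigma> j"
  unfolding incr_maps_def by auto

lemma incr_inj: assumes s: "\<sigma> \<in> incr_maps k n" shows "inj_on \<sigma> {1..k}"
proof (rule inj_onI)
  fix x y assume x: "x \<in> {1..k}" and y: "y \<in> {1..k}" and e: "\<sigma> x = \<sigma> y"
  show "x = y"
  proof (rule linorder_cases[of x y])
    assume "x < y" then show ?thesis using incr_mono[OF s x y] e by simp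
  next
    assume "y < x" then show ?thesis using incr_mono[OF s y x] e by simp
  qed
qed

lemma incr_img: "\<sigma> \<in> incr_maps k n \<Longrightarrow> \<sigma> ` {1..k} \<subseteq> {1..n}"
  unfolding incr_maps_def by auto

lemma card_compl: "\<sigma> \<in> incr_maps k n \<Longrightarrow> card ({1..n} - \<sigma> ` {1..k}) = n - k"
  using incr_inj[of \<sigma> k n] incr_img[of \<sigma> k n]
  by (simp add: card_Diff_subset card_image)

lemma length_Lc: "\<sigma> \<in> incr_maps k n \<Longrightarrow> length (Lc k n \<sigma>) = n - k"
  unfolding Lc_def using card_compl by simp

lemma compl_prod: "\<sigma> \<in> incr_maps k n \<Longrightarrow>
  (\<Prod>i=1..n-k. a (compl_elem k n \<sigma> i) (compl_elem k n \<sigma> i - i)) = Pa a (Lc k n \<sigma>)"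
  unfolding Pa_def length_Lc compl_elem_def Lc_def[symmetric] by simp

lemma incr_maps_empty: "n < k \<Longrightarrow> incr_maps k n = {}"
proof (rule ccontr)
  assume "n < k" "incr_maps k n \<noteq> {}"
  then obtain \<sigma> where s: "\<sigma> \<in> incr_maps k n" by auto
  have "card (\<sigma> ` {1..k}) \<le> card {1..n}"
    using incr_img[OF s] by (intro card_mono) auto
  then show False using card_image[OF incr_inj[OF s]] \<open>n < k\<close> by simp
qed

lemma incr_maps_0: "incr_maps 0 n = {\<lambda>_. undefined}"
  unfolding incr_maps_def by auto

lemma Lc_snoc:
  assumes s: "\<sigma> \<in> incr_maps k m"
  shows "Lc k (Suc m) \<sigma> = Lc k m \<sigma> @ [Suc m]"
proof -
  have fin: "finite ({1..m} - \<sigma> ` {1..k})" by simp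
  have img: "\<sigma> ` {1..k} \<subseteq> {1..m}" using incr_img[OF s] .
  have eq: "{1..Suc m} - \<sigma> ` {1..k} = insert (Suc m) ({1..m} - \<sigma> ` {1..k})"
    using img by auto
  have "sorted_list_of_set (insert (Suc m) ({1..m} - \<sigma> ` {1..k})) = Lc k m \<sigma> @ [Suc m]"
  proof (subst sorted_list_of_set_unique[symmetric])
    show "finite (insert (Suc m) ({1..m} - \<sigma> ` {1..k}))" by simp
    have st: "sorted_wrt (<) (Lc k m \<sigma>)" "set (Lc k m \<sigma>) = {1..m} - \<sigma> ` {1..k}"
      "distinct (Lc k m \<sigma>)"
      unfolding Lc_def using fin by auto
    show "sorted_wrt (<) (Lc k m \<sigma> @ [Suc m]) \<and> set (Lc k m \<sigma> @ [Suc m]) = insert (Suc m) ({1..m} - \<sigma> ` {1..k}) \<and>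
      length (Lc k m \<sigma> @ [Suc m]) = card (insert (Suc m) ({1..m} - \<sigma> ` {1..k}))"
      using st by (auto simp: sorted_wrt_append distinct_card[symmetric] less_Suc_eq_le)
  qed
  then show ?thesis unfolding Lc_def eq .
qed

lemma A_eq: "{\<sigma> \<in> incr_maps k (Suc m). k = 0 \<or> \<sigma> k \<noteq> Suc m} = incr_maps k m"
proof (cases "k = 0")
  case True then show ?thesis by (simp add: incr_maps_0)
next
  case False
  show ?thesis
  proof (rule set_eqI, rule iffI)
    fix \<sigma> assume "\<sigma> \<in> {\<sigma> \<in> incr_maps k (Suc m). k = 0 \<or> \<sigma> k \<noteq> Suc m}"
    then have s: "\<sigma> \<in> incr_maps k (Suc m)" "k = 0 \<or> \<sigma> k \<noteq> Suc m" by auto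
    have "k \<in> {1..k}" using False by simp
    then have "\<sigma> k \<in> {1..Suc m}" using s(1) unfolding incr_maps_def by auto
    then have sk: "\<sigma> k \<le> m" using s(2) False by auto
    have "\<sigma> i \<le> m" if "i \<in> {1..k}" for i
    proof (cases "i = k")
      case True then show ?thesis using sk by simp
    next
      case False
      then have "\<sigma> i < \<sigma> k" using s that \<open>k \<noteq> 0\<close> unfolding incr_maps_def by auto
      then show ?thesis using sk by simp
    qed
    then show "\<sigma> \<in> incr_maps k m" using s unfolding incr_maps_def by (auto simp: PiE_iff)
  next
    fix \<sigma> assume s: "\<sigma> \<in> incr_maps k m"
    have "k \<in> {1..k}" using False by simp
    then have "\<sigma> k \<le> m" using s unfolding incr_maps_def by auto
    moreover have "\<sigma> \<in> incr_maps k (Suc m)" using s unfolding incr_maps_def by (auto simp: PiE_iff)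
    ultimately show "\<sigma> \<in> {\<sigma> \<in> incr_maps k (Suc m). k = 0 \<or> \<sigma> k \<noteq> Suc m}" by auto
  qed
qed

lemma incr_mapsI:
  assumes "\<sigma> \<in> {1..k} \<rightarrow>\<^sub>E {1..n}"
    and "\<And>i j. i \<in> {1..k} \<Longrightarrow> j \<in> {1..k} \<Longrightarrow> i < j \<Longrightarrow> \<sigma> i < \<sigma> j"
  shows "\<sigma> \<in> incr_maps k n"
  using assms unfolding incr_maps_def by auto

lemma B_bij:
  assumes k: "1 \<le> k"
  shows "sum f {\<sigma> \<in> incr_maps k (Suc m). \<sigma> k = Suc m}
       = sum (\<lambda>\<tau>. f (\<tau>(k := Suc m))) (incr_maps (k-1) m)"
proof (rule sum.reindex_bij_witness[where j = "\<lambda>\<sigma>. \<sigma>(k := undefined)" and i = "\<lambda>\<tau>. \<tau>(k := Suc m)"])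
  fix \<sigma> assume "\<sigma> \<in> {\<sigma> \<in> incr_maps k (Suc m). \<sigma> k = Suc m}"
  then have s: "\<sigma> \<in> incr_maps k (Suc m)" and sk: "\<sigma> k = Suc m" by auto
  then show "\<sigma>(k := undefined, k := Suc m) = \<sigma>" by auto
  have kk: "k \<in> {1..k}" using k by auto
  have le: "\<sigma> i \<le> m" "1 \<le> \<sigma> i" if "i \<in> {1..k-1}" for i
  proof -
    have "i \<in> {1..k}" "i < k" using that k by auto
    then have "\<sigma> i < \<sigma> k" using incr_mono[OF s _ kk] by simp
    then show "\<sigma> i \<le> m" using sk by simp
    show "1 \<le> \<sigma> i" using PiE_mem[OF incr_PiE[OF s] \<open>i \<in> {1..k}\<close>] by simp
  qed
  show "\<sigma>(k := undefined) \<in> incr_maps (k - 1) m"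
  proof (rule incr_mapsI)
    show "\<sigma>(k := undefined) \<in> {1..k - 1} \<rightarrow>\<^sub>E {1..m}"
    proof (rule PiE_I)
      fix x assume x: "x \<in> {1..k-1}"
      then have "x \<noteq> k" by auto
      then show "(\<sigma>(k := undefined)) x \<in> {1..m}" using le[OF x] by simp
    next
      fix x assume x: "x \<notin> {1..k-1}"
      show "(\<sigma>(k := undefined)) x = undefined"
      proof (cases "x = k")
        case False
        then have "x \<notin> {1..k}" using x by auto
        then show ?thesis using PiE_arb[OF incr_PiE[OF s]] False by simp
      qed simp
    qed
  next
    fix i j assume ij: "i \<in> {1..k - 1}" "j \<in> {1..k - 1}" "i < j"
    then have "i \<in> {1..k}" "j \<in> {1..k}" "i \<noteq> k" "j \<noteq> k" by auto
    then show "(\<sigma>(k := undefined)) i < (\<sigma>(k := undefined)) j" using incr_mono[OF s] ij(3) by simp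
  qed
next
  fix \<tau> assume t: "\<tau> \<in> incr_maps (k - 1) m"
  have kn: "k \<notin> {1..k-1}" using k by auto
  have "\<tau> k = undefined" by (rule PiE_arb[OF incr_PiE[OF t] kn])
  then show "\<tau>(k := Suc m, k := undefined) = \<tau>" by auto
  have le: "\<tau> i \<le> m" "1 \<le> \<tau> i" if "i \<in> {1..k-1}" for i
    using PiE_mem[OF incr_PiE[OF t] that] by auto
  have ext: "\<tau> x = undefined" if "x \<notin> {1..k-1}" for x
    by (rule PiE_arb[OF incr_PiE[OF t] that])
  have "\<tau>(k := Suc m) \<in> incr_maps k (Suc m)"
  proof (rule incr_mapsI)
    show "\<tau>(k := Suc m) \<in> {1..k} \<rightarrow>\<^sub>E {1..Suc m}"
    proof (rule PiE_I)
      fix x assume x: "x \<in> {1..k}"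
      show "(\<tau>(k := Suc m)) x \<in> {1..Suc m}"
      proof (cases "x = k")
        case False then have "x \<in> {1..k-1}" using x by auto
        then show ?thesis using le[of x] False by auto
      qed simp
    next
      fix x assume x: "x \<notin> {1..k}"
      then have "x \<noteq> k" "x \<notin> {1..k-1}" using k by auto
      then show "(\<tau>(k := Suc m)) x = undefined" using ext by simp
    qed
  next
    fix i j assume that: "i \<in> {1..k}" "j \<in> {1..k}" "i < j"
    have i: "i \<in> {1..k-1}" "i \<noteq> k" using that by auto
    show "(\<tau>(k := Suc m)) i < (\<tau>(k := Suc m)) j"
    proof (cases "j = k")
      case True then show ?thesis using le(1)[OF i(1)] i by simp
    next
      case False then have "j \<in> {1..k-1}" using that by auto
      then show ?thesis using incr_mono[OF t i(1) _ that(3)] i False by simp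
    qed
  qed
  then show "\<tau>(k := Suc m) \<in> {\<sigma> \<in> incr_maps k (Suc m). \<sigma> k = Suc m}" by simp
next
  fix \<sigma> assume "\<sigma> \<in> {\<sigma> \<in> incr_maps k (Suc m). \<sigma> k = Suc m}"
  then have "\<sigma> k = Suc m" by simp
  then have "\<sigma>(k := undefined, k := Suc m) = \<sigma>" by auto
  then show "f (\<sigma>(k := undefined, k := Suc m)) = f \<sigma>" by simp
qed

lemma B_Lc:
  assumes k: "1 \<le> k" and t: "\<tau> \<in> incr_maps (k-1) m"
  shows "Lc k (Suc m) (\<tau>(k := Suc m)) = Lc (k-1) m \<tau>"
proof -
  have i: "{1..k} = insert k {1..k-1}" using k by auto
  have "\<tau>(k := Suc m) ` {1..k} = insert (Suc m) (\<tau> ` {1..k-1})"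
    unfolding i by auto
  moreover have "\<tau> ` {1..k-1} \<subseteq> {1..m}" using incr_img[OF t] .
  ultimately have "{1..Suc m} - \<tau>(k := Suc m) ` {1..k} = {1..m} - \<tau> ` {1..k-1}" by auto
  then show ?thesis unfolding Lc_def by simp
qed

lemma B_prod:
  fixes b :: "nat \<Rightarrow> nat \<Rightarrow> real" and k :: nat
  assumes k: "1 \<le> k"
  shows "(\<Prod>i=1..k. b ((\<tau>(k := Suc m)) i) i) = (\<Prod>i=1..k-1. b (\<tau> i) i) * b (Suc m) k"
proof -
  obtain j where j: "k = Suc j" using k by (cases k) auto
  have "(\<Prod>i=1..j. b ((\<tau>(Suc j := Suc m)) i) i) = (\<Prod>i=1..j. b (\<tau> i) i)"
    by (rule prod.cong) auto
  then show ?thesis unfolding j by simp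
qed

theorem mainTheorem1:
  fixes a b :: "nat \<Rightarrow> nat \<Rightarrow> real"
    and T :: "nat \<Rightarrow> int \<Rightarrow> real"
  assumes T00: "T 0 0 = 1"
    and T_out: "\<And>n k. k < 0 \<or> k > int n \<Longrightarrow> T n k = 0"
    and T_rec: "\<And>n k. n \<ge> 1 \<Longrightarrow> 0 \<le> k \<Longrightarrow> k \<le> int n \<Longrightarrow>
        T n k = a n (nat k) * T (n - 1) k + b n (nat k) * T (n - 1) (k - 1)"
  shows "\<forall>n k::nat. k \<le> n \<longrightarrow>
     T n (int k) = (\<Sum>\<sigma>\<in>incr_maps k n.
        (\<Prod>i=1..n-k. a (compl_elem k n \<sigma> i) (compl_elem k n \<sigma> i - i)) *
        (\<Prod>i=1..k. b (\<sigma> i) i))"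
proof -
  define S where "S k n = (\<Sum>\<sigma>\<in>incr_maps k n. Pa a (Lc k n \<sigma>) * (\<Prod>i=1..k. b (\<sigma> i) i))" for k n
  have SS: "(\<Sum>\<sigma>\<in>incr_maps k n.
        (\<Prod>i=1..n-k. a (compl_elem k n \<sigma> i) (compl_elem k n \<sigma> i - i)) *
        (\<Prod>i=1..k. b (\<sigma> i) i)) = S k n" for k n
    unfolding S_def by (rule sum.cong[OF refl]) (subst compl_prod, assumption, rule refl)
  have main: "k \<le> n \<Longrightarrow> T n (int k) = S k n" for n k
  proof (induction n arbitrary: k)
    case 0
    then show ?case by (simp add: S_def incr_maps_0 T00 Pa_def Lc_def)
  next
    case (Suc m)
    have rec: "T (Suc m) (int k) = a (Suc m) k * T m (int k) + b (Suc m) k * T m (int k - 1)"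
      using T_rec[of "Suc m" "int k"] Suc.prems by simp
    define f where "f \<sigma> = Pa a (Lc k (Suc m) \<sigma>) * (\<Prod>i=1..k. b (\<sigma> i) i)" for \<sigma>
    define B where "B = {\<sigma> \<in> incr_maps k (Suc m). k \<noteq> 0 \<and> \<sigma> k = Suc m}"
    have fin: "finite (incr_maps k (Suc m))"
      by (rule finite_subset[of _ "{1..k} \<rightarrow>\<^sub>E {1..Suc m}"]) (auto simp: incr_maps_def intro: finite_PiE)
    have un: "incr_maps k (Suc m) = {\<sigma> \<in> incr_maps k (Suc m). k = 0 \<or> \<sigma> k \<noteq> Suc m} \<union> B"
      unfolding B_def by blast
    have "S k (Suc m) = sum f (incr_maps k (Suc m))" unfolding S_def f_def ..
    also have "\<dots> = sum f {\<sigma> \<in> incr_maps k (Suc m). k = 0 \<or> \<sigma> k \<noteq> Suc m} + sum f B"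
    proof -
      have f1: "finite {\<sigma> \<in> incr_maps k (Suc m). k = 0 \<or> \<sigma> k \<noteq> Suc m}"
        by (rule finite_subset[OF _ fin]) blast
      have f2: "finite B" unfolding B_def by (rule finite_subset[OF _ fin]) blast
      have d: "{\<sigma> \<in> incr_maps k (Suc m). k = 0 \<or> \<sigma> k \<noteq> Suc m} \<inter> B = {}" unfolding B_def by blast
      show ?thesis by (subst un) (rule sum.union_disjoint[OF f1 f2 d])
    qed
    also have "\<dots> = sum f (incr_maps k m) + sum f B" by (simp only: A_eq)
    finally have split: "S k (Suc m) = sum f (incr_maps k m) + sum f B" .
    have partA: "sum f (incr_maps k m) = a (Suc m) k * T m (int k)"
    proof (cases "k \<le> m")
      case True
      have "sum f (incr_maps k m) = (\<Sum>\<sigma>\<in>incr_maps k m. a (Suc m) k * (Pa a (Lc k m \<sigma>) * (\<Prod>i=1..k. b (\<sigma> i) i)))"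
      proof (rule sum.cong[OF refl])
        fix \<sigma> assume s: "\<sigma> \<in> incr_maps k m"
        have "Suc m - Suc (length (Lc k m \<sigma>)) = k" using length_Lc[OF s] True by simp
        then show "f \<sigma> = a (Suc m) k * (Pa a (Lc k m \<sigma>) * (\<Prod>i=1..k. b (\<sigma> i) i))"
          unfolding f_def Lc_snoc[OF s] Pa_snoc by simp
      qed
      also have "\<dots> = a (Suc m) k * S k m" unfolding S_def by (simp add: sum_distrib_left)
      finally show ?thesis using Suc.IH[OF True] by simp
    next
      case False
      then show ?thesis using T_out[of "int k" m] incr_maps_empty[of m k] by simp
    qed
    have partB: "sum f B = b (Suc m) k * T m (int k - 1)"
    proof (cases "k = 0")
      case True
      then show ?thesis using T_out[of "int k - 1" m] unfolding B_def by simp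
    next
      case False
      then have k1: "1 \<le> k" by simp
      have "sum f B = (\<Sum>\<tau>\<in>incr_maps (k-1) m. f (\<tau>(k := Suc m)))" unfolding B_def using False B_bij[OF k1] by simp
      also have "\<dots> = (\<Sum>\<tau>\<in>incr_maps (k-1) m. b (Suc m) k * (Pa a (Lc (k-1) m \<tau>) * (\<Prod>i=1..k-1. b (\<tau> i) i)))"
      proof (rule sum.cong[OF refl])
        fix \<tau> assume t: "\<tau> \<in> incr_maps (k-1) m"
        show "f (\<tau>(k := Suc m)) = b (Suc m) k * (Pa a (Lc (k-1) m \<tau>) * (\<Prod>i=1..k-1. b (\<tau> i) i))"
          unfolding f_def B_Lc[OF k1 t] B_prod[OF k1] by simp
      qed
      also have "\<dots> = b (Suc m) k * S (k-1) m" unfolding S_def by (simp add: sum_distrib_left)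
      also have "S (k-1) m = T m (int (k-1))" using Suc.IH[of "k-1"] Suc.prems by simp
      finally show ?thesis using k1 by (simp add: of_nat_diff)
    qed
    show ?case using rec split partA partB by simp
  qed
  show ?thesis using main SS by simp
qed

end
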